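(* Let $n$ and $k$ be integers with $1\le k<n/2$. Then $\mathrm{DGP}(n,k)$ is edge-transitive if and only if $A(n,k)\neq B(n,k)$.
   Context: $\mathrm{DGP}(n,k)$ is the graph with vertex set $\{(u_i,j),(v_i,j): 0\le i\le n-1,\ j\in\{0,1\}\}$ and edges $\{(u_i,j),(u_{i+1},1-j)\}$, $\{(u_i,j),(v_i,1-j)\}$ (spokes, forming the set $\mathcal{S}$), $\{(v_i,j),(v_{i+k},1-j)\}$, subscripts mod $n$ (the canonical double cover of the generalized Petersen graph $\mathrm{GP}(n,k)$). $A(n,k)=\mathrm{Aut}(\mathrm{DGP}(n,k))$ and $B(n,k)$ is the setwise stabilizer of $\mathcal{S}$ in $A(n,k)$. *)

theory Defs
  imports Main
begin

text \<open>Vertices of DGP(n,k): U i j stands for (u_i, j), V i j for (v_i, j);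
  the layer index j in {0,1} is encoded as a boolean (False = 0, True = 1),
  so 1 - j is \<not> j.\<close>
datatype dvert = U nat bool | V nat bool

definition dgp_verts :: "nat \<Rightarrow> dvert set" where
  "dgp_verts n = {U i j | i j. i < n} \<union> {V i j | i j. i < n}"

definition dgp_outer :: "nat \<Rightarrow> dvert set set" where
  "dgp_outer n = {{U i j, U ((i + 1) mod n) (\<not> j)} | i j. i < n}"

definition dgp_spokes :: "nat \<Rightarrow> dvert set set" where
  "dgp_spokes n = {{U i j, V i (\<not> j)} | i j. i < n}"

definition dgp_inner :: "nat \<Rightarrow> nat \<Rightarrow> dvert set set" where
  "dgp_inner n k = {{V i j, V ((i + k) mod n) (\<not> j)} | i j. i < n}"

definition dgp_edges :: "nat \<Rightarrow> nat \<Rightarrow> dvert set set" where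
  "dgp_edges n k = dgp_outer n \<union> dgp_spokes n \<union> dgp_inner n k"

definition graph_aut :: "'a set \<Rightarrow> 'a set set \<Rightarrow> ('a \<Rightarrow> 'a) set" where
  "graph_aut Vs E = {f. bij_betw f Vs Vs \<and> (\<forall>x. x \<notin> Vs \<longrightarrow> f x = x) \<and>
      (\<forall>x\<in>Vs. \<forall>y\<in>Vs. {x, y} \<in> E \<longleftrightarrow> {f x, f y} \<in> E)}"

definition edge_transitive :: "'a set \<Rightarrow> 'a set set \<Rightarrow> bool" where
  "edge_transitive Vs E \<longleftrightarrow> (\<forall>e\<in>E. \<forall>e'\<in>E. \<exists>f\<in>graph_aut Vs E. f ` e = e')"

definition A_grp :: "nat \<Rightarrow> nat \<Rightarrow> (dvert \<Rightarrow> dvert) set" where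
  "A_grp n k = graph_aut (dgp_verts n) (dgp_edges n k)"

definition B_grp :: "nat \<Rightarrow> nat \<Rightarrow> (dvert \<Rightarrow> dvert) set" where
  "B_grp n k = {f \<in> A_grp n k. (\<lambda>e. f ` e) ` dgp_spokes n = dgp_spokes n}"

end

theory Submission
  imports Defs
begin

lemma gaut_id: "(\<lambda>x. x) \<in> graph_aut Vs E"
  unfolding graph_aut_def by (simp add: bij_betw_def)

lemma gaut_comp:
  assumes f: "f \<in> graph_aut Vs E" and g: "g \<in> graph_aut Vs E"
  shows "f \<circ> g \<in> graph_aut Vs E"
proof -
  have bf: "bij_betw f Vs Vs" and bg: "bij_betw g Vs Vs" using f g unfolding graph_aut_def by auto
  have "bij_betw (f \<circ> g) Vs Vs" by (rule bij_betw_trans[OF bg bf])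
  moreover have "\<forall>x. x \<notin> Vs \<longrightarrow> (f \<circ> g) x = x" using f g unfolding graph_aut_def by auto
  moreover have "\<forall>x\<in>Vs. \<forall>y\<in>Vs. {x, y} \<in> E \<longleftrightarrow> {(f \<circ> g) x, (f \<circ> g) y} \<in> E"
  proof (intro ballI)
    fix x y assume x: "x \<in> Vs" and y: "y \<in> Vs"
    have gx: "g x \<in> Vs" and gy: "g y \<in> Vs" using bg x y bij_betw_apply by metis+
    have "{x, y} \<in> E \<longleftrightarrow> {g x, g y} \<in> E" using g x y unfolding graph_aut_def by auto
    also have "\<dots> \<longleftrightarrow> {f (g x), f (g y)} \<in> E" using f gx gy unfolding graph_aut_def by auto
    finally show "{x, y} \<in> E \<longleftrightarrow> {(f \<circ> g) x, (f \<circ> g) y} \<in> E" by simp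
  qed
  ultimately show ?thesis unfolding graph_aut_def by blast
qed

definition ginv :: "'a set \<Rightarrow> ('a \<Rightarrow> 'a) \<Rightarrow> 'a \<Rightarrow> 'a" where
  "ginv Vs f = (\<lambda>x. if x \<in> Vs then inv_into Vs f x else x)"

lemma ginv_f:
  assumes f: "f \<in> graph_aut Vs E" and x: "x \<in> Vs"
  shows "ginv Vs f (f x) = x"
proof -
  have bf: "bij_betw f Vs Vs" using f unfolding graph_aut_def by auto
  have "f x \<in> Vs" using bf x bij_betw_apply by metis
  then show ?thesis unfolding ginv_def using bf x
    by (simp add: bij_betw_def inv_into_f_f)
qed

lemma f_ginv:
  assumes f: "f \<in> graph_aut Vs E" and x: "x \<in> Vs"
  shows "f (ginv Vs f x) = x"
proof -
  have bf: "bij_betw f Vs Vs" using f unfolding graph_aut_def by auto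
  then have "x \<in> f ` Vs" using x by (simp add: bij_betw_def)
  then show ?thesis unfolding ginv_def using x by (simp add: f_inv_into_f)
qed

lemma gaut_inv:
  assumes f: "f \<in> graph_aut Vs E"
  shows "ginv Vs f \<in> graph_aut Vs E"
proof -
  have bf: "bij_betw f Vs Vs" using f unfolding graph_aut_def by auto
  have b1: "bij_betw (inv_into Vs f) Vs Vs" using bf by (metis bij_betw_inv_into)
  have "bij_betw (ginv Vs f) Vs Vs"
    using b1 by (rule bij_betw_cong[THEN iffD1, rotated]) (simp add: ginv_def)
  moreover have "\<forall>x. x \<notin> Vs \<longrightarrow> ginv Vs f x = x" by (simp add: ginv_def)
  moreover have "\<forall>x\<in>Vs. \<forall>y\<in>Vs. {x, y} \<in> E \<longleftrightarrow> {ginv Vs f x, ginv Vs f y} \<in> E"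
  proof (intro ballI)
    fix x y assume x: "x \<in> Vs" and y: "y \<in> Vs"
    have gx: "ginv Vs f x \<in> Vs" and gy: "ginv Vs f y \<in> Vs"
      using \<open>bij_betw (ginv Vs f) Vs Vs\<close> x y bij_betw_apply by metis+
    have "{ginv Vs f x, ginv Vs f y} \<in> E \<longleftrightarrow> {f (ginv Vs f x), f (ginv Vs f y)} \<in> E"
      using f gx gy unfolding graph_aut_def by auto
    then show "{x, y} \<in> E \<longleftrightarrow> {ginv Vs f x, ginv Vs f y} \<in> E"
      using f_ginv[OF f x] f_ginv[OF f y] by simp
  qed
  ultimately show ?thesis unfolding graph_aut_def by blast
qed

lemma gaut_edge:
  assumes f: "f \<in> graph_aut Vs E" and x: "x \<in> Vs" and y: "y \<in> Vs" and e: "{x,y} \<in> E"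
  shows "f ` {x,y} \<in> E"
  using assms unfolding graph_aut_def by auto

lemma verts_simps[simp]:
  "U i j \<in> dgp_verts n \<longleftrightarrow> i < n" "V i j \<in> dgp_verts n \<longleftrightarrow> i < n"
  unfolding dgp_verts_def by auto

fun isU :: "dvert \<Rightarrow> bool" where
  "isU (U _ _) = True" | "isU (V _ _) = False"

lemma edge_cases:
  assumes "e \<in> dgp_edges n k"
  obtains (O) i j where "i < n" "e = {U i j, U ((i + 1) mod n) (\<not> j)}"
  | (S) i j where "i < n" "e = {U i j, V i (\<not> j)}"
  | (I) i j where "i < n" "e = {V i j, V ((i + k) mod n) (\<not> j)}"
  using assms unfolding dgp_edges_def dgp_outer_def dgp_spokes_def dgp_inner_def by blast

lemma edge_verts:
  assumes "e \<in> dgp_edges n k"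
  shows "\<exists>x\<in>dgp_verts n. \<exists>y\<in>dgp_verts n. e = {x,y}"
  using assms
proof (cases rule: edge_cases)
  case (O i j)
  then have "U i j \<in> dgp_verts n" "U ((i + 1) mod n) (\<not> j) \<in> dgp_verts n" by auto
  then show ?thesis using O(2) by blast
next
  case (S i j)
  then have "U i j \<in> dgp_verts n" "V i (\<not> j) \<in> dgp_verts n" by auto
  then show ?thesis using S(2) by blast
next
  case (I i j)
  then have "V i j \<in> dgp_verts n" "V ((i + k) mod n) (\<not> j) \<in> dgp_verts n" by auto
  then show ?thesis using I(2) by blast
qed

lemma edge_sub: "e \<in> dgp_edges n k \<Longrightarrow> e \<subseteq> dgp_verts n"
  using edge_verts by blast

lemma A_edge: "f \<in> A_grp n k \<Longrightarrow> e \<in> dgp_edges n k \<Longrightarrow> f ` e \<in> dgp_edges n k"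
  unfolding A_grp_def using edge_verts gaut_edge by metis

section \<open>Rotations and flips\<close>

definition aut :: "nat \<Rightarrow> nat \<Rightarrow> bool \<Rightarrow> dvert \<Rightarrow> dvert" where
  "aut n t b x = (case x of U i j \<Rightarrow> if i < n then U ((i + t) mod n) (j \<noteq> b) else U i j
     | V i j \<Rightarrow> if i < n then V ((i + t) mod n) (j \<noteq> b) else V i j)"

lemma aut_simps[simp]:
  "aut n t b (U i j) = (if i < n then U ((i + t) mod n) (j \<noteq> b) else U i j)"
  "aut n t b (V i j) = (if i < n then V ((i + t) mod n) (j \<noteq> b) else V i j)"
  by (simp_all add: aut_def)

lemma aut_verts: "x \<in> dgp_verts n \<Longrightarrow> aut n t b x \<in> dgp_verts n"
  by (cases x) auto

lemma aut_inv: "x \<in> dgp_verts n \<Longrightarrow> aut n (n - t mod n) b (aut n t b x) = x"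
proof (cases x)
  case (U i j)
  assume "x \<in> dgp_verts n"
  then have i: "i < n" using U by simp
  have "((i + t) mod n + (n - t mod n)) mod n = i"
  proof -
    have "((i + t) mod n + (n - t mod n)) mod n = (i + t + (n - t mod n)) mod n"
      by (simp add: mod_simps)
    also have "i + t + (n - t mod n) = i + (t div n) * n + n"
      using i div_mult_mod_eq[of t n] mod_le_divisor[of n t] by linarith
    also have "(i + (t div n) * n + n) mod n = i" using i by simp
    finally show ?thesis .
  qed
  then show ?thesis using U i by auto
next
  case (V i j)
  assume "x \<in> dgp_verts n"
  then have i: "i < n" using V by simp
  have "((i + t) mod n + (n - t mod n)) mod n = i"
  proof -
    have "((i + t) mod n + (n - t mod n)) mod n = (i + t + (n - t mod n)) mod n"
      by (simp add: mod_simps)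
    also have "i + t + (n - t mod n) = i + (t div n) * n + n"
      using i div_mult_mod_eq[of t n] mod_le_divisor[of n t] by linarith
    also have "(i + (t div n) * n + n) mod n = i" using i by simp
    finally show ?thesis .
  qed
  then show ?thesis using V i by auto
qed


lemma aut_edge:
  assumes n: "0 < n" and e: "e \<in> dgp_edges n k"
  shows "aut n t b ` e \<in> dgp_edges n k"
  using e
proof (cases rule: edge_cases)
  case (O i j)
  have m: "((i + 1) mod n + t) mod n = ((i + t) mod n + 1) mod n" by (simp add: mod_simps ac_simps)
  have "aut n t b ` e = {U ((i + t) mod n) (j \<noteq> b), U (((i + t) mod n + 1) mod n) (\<not> (j \<noteq> b))}"
    using O n m by auto
  moreover have "(i + t) mod n < n" using n by simp
  ultimately show ?thesis unfolding dgp_edges_def dgp_outer_def by blast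
next
  case (S i j)
  have "aut n t b ` e = {U ((i + t) mod n) (j \<noteq> b), V ((i + t) mod n) (\<not> (j \<noteq> b))}"
    using S n by auto
  moreover have "(i + t) mod n < n" using n by simp
  ultimately show ?thesis unfolding dgp_edges_def dgp_spokes_def by blast
next
  case (I i j)
  have m: "((i + k) mod n + t) mod n = ((i + t) mod n + k) mod n" by (simp add: mod_simps ac_simps)
  have "aut n t b ` e = {V ((i + t) mod n) (j \<noteq> b), V (((i + t) mod n + k) mod n) (\<not> (j \<noteq> b))}"
    using I n m by auto
  moreover have "(i + t) mod n < n" using n by simp
  ultimately show ?thesis unfolding dgp_edges_def dgp_inner_def by blast
qed

lemma aut_A:
  assumes n: "0 < n"
  shows "aut n t b \<in> A_grp n k"
proof -
  let ?f = "aut n t b" and ?g = "aut n (n - t mod n) b"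
  have "bij_betw ?f (dgp_verts n) (dgp_verts n)"
  proof (rule bij_betw_byWitness[where f' = ?g])
    show "\<forall>a\<in>dgp_verts n. ?g (?f a) = a" using aut_inv by blast
    show "\<forall>a\<in>dgp_verts n. ?f (?g a) = a"
    proof
      fix a assume a: "a \<in> dgp_verts n"
      have "?g (?f (?g a)) = ?g a" using aut_inv aut_verts a by blast
      have "aut n (n - (n - t mod n) mod n) b (?g (?f (?g a))) = ?f (?g a)"
        using aut_inv aut_verts a by blast
      moreover have "aut n (n - (n - t mod n) mod n) b (?g a) = a"
        using aut_inv a by blast
      ultimately show "?f (?g a) = a" using \<open>?g (?f (?g a)) = ?g a\<close> by simp
    qed
    show "?f ` dgp_verts n \<subseteq> dgp_verts n" using aut_verts by blast
    show "?g ` dgp_verts n \<subseteq> dgp_verts n" using aut_verts by blast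
  qed
  moreover have "\<forall>x. x \<notin> dgp_verts n \<longrightarrow> ?f x = x"
  proof (intro allI impI)
    fix x assume "x \<notin> dgp_verts n" then show "?f x = x" by (cases x) auto
  qed
  moreover have "\<forall>x\<in>dgp_verts n. \<forall>y\<in>dgp_verts n. {x, y} \<in> dgp_edges n k \<longleftrightarrow> {?f x, ?f y} \<in> dgp_edges n k"
  proof (intro ballI iffI)
    fix x y assume x: "x \<in> dgp_verts n" and y: "y \<in> dgp_verts n"
    { assume "{x, y} \<in> dgp_edges n k"
      from aut_edge[OF n this, of t b] show "{?f x, ?f y} \<in> dgp_edges n k" by simp }
    { assume "{?f x, ?f y} \<in> dgp_edges n k"
      from aut_edge[OF n this, of "n - t mod n" b] show "{x, y} \<in> dgp_edges n k"
        using aut_inv[OF x] aut_inv[OF y] by simp }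
  qed
  ultimately show ?thesis unfolding A_grp_def graph_aut_def by blast
qed


definition rel :: "nat \<Rightarrow> nat \<Rightarrow> dvert set \<Rightarrow> dvert set \<Rightarrow> bool" where
  "rel n k e e' \<longleftrightarrow> (\<exists>g\<in>A_grp n k. g ` e = e')"

lemma rel_refl: "rel n k e e"
  unfolding rel_def A_grp_def using gaut_id by force

lemma rel_trans: "rel n k e1 e2 \<Longrightarrow> rel n k e2 e3 \<Longrightarrow> rel n k e1 e3"
  unfolding rel_def A_grp_def
proof -
  assume "\<exists>g\<in>graph_aut (dgp_verts n) (dgp_edges n k). g ` e1 = e2"
    and "\<exists>g\<in>graph_aut (dgp_verts n) (dgp_edges n k). g ` e2 = e3"
  then obtain g h where g: "g \<in> graph_aut (dgp_verts n) (dgp_edges n k)" "g ` e1 = e2"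
    and h: "h \<in> graph_aut (dgp_verts n) (dgp_edges n k)" "h ` e2 = e3" by blast
  have "(h \<circ> g) ` e1 = e3" using g(2) h(2) by (metis image_comp)
  then show "\<exists>g\<in>graph_aut (dgp_verts n) (dgp_edges n k). g ` e1 = e3"
    using gaut_comp[OF h(1) g(1)] by blast
qed

lemma rel_sym: "e \<subseteq> dgp_verts n \<Longrightarrow> rel n k e e' \<Longrightarrow> rel n k e' e"
  unfolding rel_def A_grp_def
proof -
  assume sub: "e \<subseteq> dgp_verts n" and "\<exists>g\<in>graph_aut (dgp_verts n) (dgp_edges n k). g ` e = e'"
  then obtain g where g: "g \<in> graph_aut (dgp_verts n) (dgp_edges n k)" "g ` e = e'" by blast
  have "ginv (dgp_verts n) g ` e' = e"
  proof -
    have "ginv (dgp_verts n) g ` e' = (\<lambda>x. ginv (dgp_verts n) g (g x)) ` e"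
      using g(2) by auto
    also have "\<dots> = e" using ginv_f[OF g(1)] sub by (auto simp: subset_iff image_iff)
    finally show ?thesis .
  qed
  then show "\<exists>g\<in>graph_aut (dgp_verts n) (dgp_edges n k). g ` e' = e"
    using gaut_inv[OF g(1)] by blast
qed

lemma rel_sym_E: "e \<in> dgp_edges n k \<Longrightarrow> rel n k e e' \<Longrightarrow> rel n k e' e"
  using rel_sym edge_sub by blast

definition eO :: "nat \<Rightarrow> dvert set" where "eO n = {U 0 False, U (1 mod n) True}"
definition eS :: "dvert set" where "eS = {U 0 False, V 0 True}"
definition eI :: "nat \<Rightarrow> nat \<Rightarrow> dvert set" where "eI n k = {V 0 False, V (k mod n) True}"

lemma eS_E: "0 < n \<Longrightarrow> eS \<in> dgp_spokes n"
  unfolding eS_def dgp_spokes_def by force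

lemma eO_E: "0 < n \<Longrightarrow> eO n \<in> dgp_outer n"
  unfolding eO_def dgp_outer_def by force

lemma eI_E: "0 < n \<Longrightarrow> eI n k \<in> dgp_inner n k"
  unfolding eI_def dgp_inner_def by force

lemma within_O:
  assumes "e \<in> dgp_outer n" shows "rel n k (eO n) e"
proof -
  obtain i j where i: "i < n" and e: "e = {U i j, U ((i + 1) mod n) (\<not> j)}"
    using assms unfolding dgp_outer_def by blast
  have n: "0 < n" using i by simp
  have m: "(1 mod n + i) mod n = (i + 1) mod n" by (simp add: mod_simps ac_simps)
  have "aut n i j ` eO n = e" unfolding eO_def e using i n m by auto
  then show ?thesis unfolding rel_def using aut_A[OF n] by blast
qed

lemma within_S:
  assumes "e \<in> dgp_spokes n" shows "rel n k eS e"
proof -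
  obtain i j where i: "i < n" and e: "e = {U i j, V i (\<not> j)}"
    using assms unfolding dgp_spokes_def by blast
  have n: "0 < n" using i by simp
  have "aut n i j ` eS = e" unfolding eS_def e using i n by auto
  then show ?thesis unfolding rel_def using aut_A[OF n] by blast
qed

lemma within_I:
  assumes "e \<in> dgp_inner n k" shows "rel n k (eI n k) e"
proof -
  obtain i j where i: "i < n" and e: "e = {V i j, V ((i + k) mod n) (\<not> j)}"
    using assms unfolding dgp_inner_def by blast
  have n: "0 < n" using i by simp
  have m: "(k mod n + i) mod n = (i + k) mod n" by (simp add: mod_simps ac_simps)
  have "aut n i j ` eI n k = e" unfolding eI_def e using i n m by auto
  then show ?thesis unfolding rel_def using aut_A[OF n] by blast
qed

lemma outer_U: "e \<in> dgp_outer n \<Longrightarrow> x \<in> e \<Longrightarrow> isU x"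
  unfolding dgp_outer_def by auto

lemma inner_V: "e \<in> dgp_inner n k \<Longrightarrow> x \<in> e \<Longrightarrow> \<not> isU x"
  unfolding dgp_inner_def by auto


lemma edges_un: "dgp_edges n k = dgp_outer n \<union> dgp_spokes n \<union> dgp_inner n k"
  by (simp add: dgp_edges_def)

lemma B_sub: "f \<in> B_grp n k \<longleftrightarrow> f \<in> A_grp n k \<and> (\<lambda>e. f ` e) ` dgp_spokes n = dgp_spokes n"
  by (simp add: B_grp_def)

theorem lemma5p6:
  fixes n k :: nat
  assumes "1 \<le> k" and "2 * k < n"
  shows "edge_transitive (dgp_verts n) (dgp_edges n k) \<longleftrightarrow> A_grp n k \<noteq> B_grp n k"
proof -
  have n: "0 < n" and n2: "2 \<le> n" using assms by auto
  have eSE: "eS \<in> dgp_edges n k" using eS_E[OF n] edges_un by blast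
  have eOE: "eO n \<in> dgp_edges n k" using eO_E[OF n] edges_un by blast
  have eIE: "eI n k \<in> dgp_edges n k" using eI_E[OF n] edges_un by blast
  have eSsub: "eS \<subseteq> dgp_verts n" using edge_sub[OF eSE] .
  show ?thesis
  proof
    assume ET: "edge_transitive (dgp_verts n) (dgp_edges n k)"
    then obtain f where f: "f \<in> A_grp n k" "f ` eS = eO n"
      using eSE eOE unfolding edge_transitive_def A_grp_def by blast
    have m1: "1 mod n = 1" using n2 by simp
    have "eO n \<notin> dgp_spokes n"
      unfolding eO_def dgp_spokes_def m1 by (auto simp: doubleton_eq_iff)
    then have "f \<notin> B_grp n k"
      using f eS_E[OF n] unfolding B_sub by (metis image_eqI)
    then show "A_grp n k \<noteq> B_grp n k" using f(1) by blast
  next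
    assume AB: "A_grp n k \<noteq> B_grp n k"
    have "B_grp n k \<subseteq> A_grp n k" unfolding B_grp_def by blast
    then obtain f where f: "f \<in> A_grp n k" "f \<notin> B_grp n k" using AB by blast
    then have fS: "(\<lambda>e. f ` e) ` dgp_spokes n \<noteq> dgp_spokes n" unfolding B_sub by blast
    have "\<exists>g\<in>A_grp n k. \<exists>s\<in>dgp_spokes n. g ` s \<notin> dgp_spokes n"
    proof (rule ccontr)
      assume "\<not> ?thesis"
      then have all1: "\<And>g s. g \<in> A_grp n k \<Longrightarrow> s \<in> dgp_spokes n \<Longrightarrow> g ` s \<in> dgp_spokes n" by blast
      have fa: "f \<in> graph_aut (dgp_verts n) (dgp_edges n k)" using f(1) unfolding A_grp_def .
      let ?fi = "ginv (dgp_verts n) f"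
      have fi: "?fi \<in> A_grp n k" using gaut_inv[OF fa] unfolding A_grp_def .
      have "(\<lambda>e. f ` e) ` dgp_spokes n = dgp_spokes n"
      proof
        show "(\<lambda>e. f ` e) ` dgp_spokes n \<subseteq> dgp_spokes n" using all1[OF f(1)] by blast
        show "dgp_spokes n \<subseteq> (\<lambda>e. f ` e) ` dgp_spokes n"
        proof
          fix s assume s: "s \<in> dgp_spokes n"
          then have ssub: "s \<subseteq> dgp_verts n" using edge_sub edges_un by blast
          have "f ` (?fi ` s) = s"
          proof -
            have "f ` (?fi ` s) = (\<lambda>x. f (?fi x)) ` s" by (simp add: image_image)
            also have "\<dots> = s" using f_ginv[OF fa] ssub by (auto simp: subset_iff image_iff)
            finally show ?thesis .
          qed
          moreover have "?fi ` s \<in> dgp_spokes n" using all1[OF fi s] .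
          ultimately show "s \<in> (\<lambda>e. f ` e) ` dgp_spokes n" by (metis image_eqI)
        qed
      qed
      then show False using fS by blast
    qed
    then obtain g s where g: "g \<in> A_grp n k" and s: "s \<in> dgp_spokes n" and gs: "g ` s \<notin> dgp_spokes n"
      by blast
    have sE: "s \<in> dgp_edges n k" using s edges_un by blast
    have gsE: "g ` s \<in> dgp_edges n k" using A_edge[OF g sE] .
    then have gsOI: "g ` s \<in> dgp_outer n \<or> g ` s \<in> dgp_inner n k" using gs edges_un by blast
    obtain a b where a: "a < n" and s_eq: "s = {U a b, V a (\<not> b)}"
      using s unfolding dgp_spokes_def by blast
    have rgs: "rel n k s (g ` s)" unfolding rel_def using g by blast
    have rSs: "rel n k eS s" using within_S[OF s] .
    have rSgs: "rel n k eS (g ` s)" using rel_trans[OF rSs rgs] .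
    have rels: "rel n k eS (eO n) \<and> rel n k eS (eI n k)"
      using gsOI
    proof
      assume gsO: "g ` s \<in> dgp_outer n"
      have rSO: "rel n k eS (eO n)"
        using rel_trans[OF rSgs rel_sym_E[OF eOE within_O[OF gsO]]] .
      have rSI: "rel n k eS (eI n k)"
      proof (rule ccontr)
        assume nSI: "\<not> rel n k eS (eI n k)"
        have Vp: "\<not> isU (h (V i j))" if h: "h \<in> A_grp n k" and i: "i < n" for h i j
        proof -
          let ?e = "{V i j, V ((i + k) mod n) (\<not> j)}"
          have eI': "?e \<in> dgp_inner n k" unfolding dgp_inner_def using i by blast
          then have eE: "?e \<in> dgp_edges n k" using edges_un by blast
          have heE: "h ` ?e \<in> dgp_edges n k" using A_edge[OF h eE] .
          have rhe: "rel n k (h ` ?e) ?e" using rel_sym_E[OF eE] h unfolding rel_def by blast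
          have reI: "rel n k ?e (eI n k)" using rel_sym_E[OF eIE within_I[OF eI']] .
          have "h ` ?e \<notin> dgp_spokes n"
          proof
            assume "h ` ?e \<in> dgp_spokes n"
            then have "rel n k eS (h ` ?e)" by (rule within_S)
            then show False using nSI rel_trans rhe reI by metis
          qed
          moreover have "h ` ?e \<notin> dgp_outer n"
          proof
            assume "h ` ?e \<in> dgp_outer n"
            then have "rel n k (eO n) (h ` ?e)" by (rule within_O)
            then show False using nSI rel_trans rhe reI rSO by metis
          qed
          ultimately have "h ` ?e \<in> dgp_inner n k" using heE edges_un by blast
          then show ?thesis using inner_V by blast
        qed
        have "isU (g (V a (\<not> b)))" using outer_U[OF gsO] s_eq by blast
        then show False using Vp[OF g a] by blast
      qed
      show ?thesis using rSO rSI by blast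
    next
      assume gsI: "g ` s \<in> dgp_inner n k"
      have rSI: "rel n k eS (eI n k)"
        using rel_trans[OF rSgs rel_sym_E[OF eIE within_I[OF gsI]]] .
      have rSO: "rel n k eS (eO n)"
      proof (rule ccontr)
        assume nSO: "\<not> rel n k eS (eO n)"
        have Up: "isU (h (U i j))" if h: "h \<in> A_grp n k" and i: "i < n" for h i j
        proof -
          let ?e = "{U i j, U ((i + 1) mod n) (\<not> j)}"
          have eO': "?e \<in> dgp_outer n" unfolding dgp_outer_def using i by blast
          then have eE: "?e \<in> dgp_edges n k" using edges_un by blast
          have heE: "h ` ?e \<in> dgp_edges n k" using A_edge[OF h eE] .
          have rhe: "rel n k (h ` ?e) ?e" using rel_sym_E[OF eE] h unfolding rel_def by blast
          have reO: "rel n k ?e (eO n)" using rel_sym_E[OF eOE within_O[OF eO']] .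
          have "h ` ?e \<notin> dgp_spokes n"
          proof
            assume "h ` ?e \<in> dgp_spokes n"
            then have "rel n k eS (h ` ?e)" by (rule within_S)
            then show False using nSO rel_trans rhe reO by metis
          qed
          moreover have "h ` ?e \<notin> dgp_inner n k"
          proof
            assume "h ` ?e \<in> dgp_inner n k"
            then have "rel n k (eI n k) (h ` ?e)" by (rule within_I)
            then show False using nSO rel_trans rhe reO rSI by metis
          qed
          ultimately have "h ` ?e \<in> dgp_outer n" using heE edges_un by blast
          then show ?thesis using outer_U by blast
        qed
        have "\<not> isU (g (U a b))" using inner_V[OF gsI] s_eq by blast
        then show False using Up[OF g a] by blast
      qed
      show ?thesis using rSO rSI by blast
    qed
    have allS: "rel n k eS x" if x: "x \<in> dgp_edges n k" for x
    proof -
      have "x \<in> dgp_outer n \<or> x \<in> dgp_spokes n \<or> x \<in> dgp_inner n k" using x edges_un by blast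
      then show ?thesis
        using rels within_O within_S within_I rel_trans by metis
    qed
    show "edge_transitive (dgp_verts n) (dgp_edges n k)"
      unfolding edge_transitive_def
    proof (intro ballI)
      fix e e' assume e: "e \<in> dgp_edges n k" and e': "e' \<in> dgp_edges n k"
      have "rel n k e e'" using rel_trans[OF rel_sym[OF eSsub allS[OF e]] allS[OF e']] .
      then show "\<exists>f\<in>graph_aut (dgp_verts n) (dgp_edges n k). f ` e = e'"
        unfolding rel_def A_grp_def .
    qed
  qed
qed

end
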